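(* Let $E$ be a normed space over $\mathbb{K}\in\{\mathbb{R},\mathbb{C}\}$, let $n\in\{1,2\}$, and let $P:E\to\mathbb{K}$ be an $n$-homogeneous polynomial (not assumed continuous). Then $P$ is continuous if and only if $P(C)$ is connected for every connected set $C\subset E$.
   Context: A map $P:E\to\mathbb{K}$ is an $n$-homogeneous polynomial if there is a symmetric $n$-linear mapping $L:E^n\to\mathbb{K}$ (not necessarily continuous) with $P(x)=L(x,\ldots,x)$ for all $x\in E$. *)

theory Defs
  imports "HOL-Analysis.Analysis" "HOL-Combinatorics.Permutations"
begin

text \<open>Tuples in E^n are functions nat => 'a,
  of which only the arguments 0..n-1 matter.\<close>
definition symmetric_multilinear :: "('k::comm_ring_1 \<Rightarrow> 'a::ab_group_add \<Rightarrow> 'a) \<Rightarrow> nat \<Rightarrow> ((nat \<Rightarrow> 'a) \<Rightarrow> 'k) \<Rightarrow> bool" where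
  "symmetric_multilinear sc n L \<longleftrightarrow>
     (\<forall>v w. (\<forall>i<n. v i = w i) \<longrightarrow> L v = L w) \<and>
     (\<forall>v i x y. i < n \<longrightarrow> L (v(i := x + y)) = L (v(i := x)) + L (v(i := y))) \<and>
     (\<forall>v i c x. i < n \<longrightarrow> L (v(i := sc c x)) = c * L (v(i := x))) \<and>
     (\<forall>v p. p permutes {..<n} \<longrightarrow> L (v \<circ> p) = L v)"

definition homogeneous_polynomial :: "('k::comm_ring_1 \<Rightarrow> 'a::ab_group_add \<Rightarrow> 'a) \<Rightarrow> nat \<Rightarrow> ('a \<Rightarrow> 'k) \<Rightarrow> bool" where
  "homogeneous_polynomial sc n P \<longleftrightarrow>
     (\<exists>L. symmetric_multilinear sc n L \<and> (\<forall>x. P x = L (\<lambda>_. x)))"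

text \<open>A complex scalar multiplication making a real normed space into a complex normed
  space (extending the real scalar multiplication, with norm(c x) = |c| norm x).\<close>
definition complex_normed_scaling :: "(complex \<Rightarrow> 'a::real_normed_vector \<Rightarrow> 'a) \<Rightarrow> bool" where
  "complex_normed_scaling sc \<longleftrightarrow>
     (\<forall>c x y. sc c (x + y) = sc c x + sc c y) \<and>
     (\<forall>c d x. sc (c + d) x = sc c x + sc d x) \<and>
     (\<forall>c d x. sc (c * d) x = sc c (sc d x)) \<and>
     (\<forall>x. sc 1 x = x) \<and>
     (\<forall>r x. sc (complex_of_real r) x = scaleR r x) \<and>
     (\<forall>c x. norm (sc c x) = cmod c * norm x)"

end

theory Submission
  imports Defs
begin

lemma fan:
  fixes Q :: "'a::real_normed_vector \<Rightarrow> real"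
  assumes wit: "\<forall>e>0. \<exists>b. norm b < e \<and> Q b = 1"
    and link: "\<forall>a b. Q a = 1 \<longrightarrow> Q b = 1 \<longrightarrow> (\<exists>S b'. connected S \<and> a \<in> S \<and> b' \<in> S \<and> norm b' = norm b \<and> (\<forall>x\<in>S. Q x \<ge> 1))"
  shows "\<exists>C. connected C \<and> 0 \<in> C \<and> (\<exists>a\<in>C. Q a \<ge> 1) \<and> (\<forall>x\<in>C. x \<noteq> 0 \<longrightarrow> Q x \<ge> 1)"
proof -
  obtain a where a: "Q a = 1" using wit by (metis zero_less_one)
  define D where "D = \<Union> {S. connected S \<and> a \<in> S \<and> (\<forall>x\<in>S. Q x \<ge> 1)}"
  have cD: "connected D" unfolding D_def
    by (rule connected_Union) auto
  have aD: "a \<in> D" unfolding D_def using a by (intro UnionI[of "{a}"]) auto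
  have QD: "\<forall>x\<in>D. Q x \<ge> 1" unfolding D_def by auto
  have "0 \<in> closure D"
    unfolding closure_approachable
  proof (intro allI impI)
    fix e :: real assume "e > 0"
    then obtain b where b: "norm b < e" "Q b = 1" using wit by blast
    then obtain S b' where S: "connected S" "a \<in> S" "b' \<in> S" "norm b' = norm b" "\<forall>x\<in>S. Q x \<ge> 1"
      using link a by blast
    have "b' \<in> D" unfolding D_def using S by blast
    then show "\<exists>y\<in>D. dist y 0 < e" using S b by (intro bexI[of _ b']) (auto simp: dist_norm)
  qed
  have "connected (insert 0 D)"
    by (rule connected_intermediate_closure[OF cD]) (use \<open>0 \<in> closure D\<close> closure_subset in auto)
  then show ?thesis using aD QD a by (intro exI[of _ "insert 0 D"]) auto
qed

lemma not_conn:
  fixes Q :: "'a::zero \<Rightarrow> real" and P :: "'a \<Rightarrow> 'c::topological_space"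
  assumes h: "continuous_on UNIV h" and QP: "\<forall>x. Q x = h (P x)"
    and C: "0 \<in> C" "a \<in> C" "Q a \<ge> 1" "\<forall>x\<in>C. x \<noteq> 0 \<longrightarrow> Q x \<ge> 1" and Q0: "Q 0 = 0"
  shows "\<not> connected (P ` C)"
proof
  assume "connected (P ` C)"
  then have "connected (h ` P ` C)"
    using connected_continuous_image[OF continuous_on_subset[OF h subset_UNIV]] by blast
  moreover have "h ` P ` C = Q ` C" using QP by (auto simp: image_image)
  ultimately have cc: "connected (Q ` C)" by simp
  have "1/2 \<in> Q ` C"
    by (rule connectedD_interval[OF cc, of 0 "Q a"]) (use C Q0 in \<open>auto intro: image_eqI\<close>)
  then obtain x where "x \<in> C" "Q x = 1/2" by auto
  then show False using C Q0 by (cases "x = 0") force+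
qed

lemma link_lin:
  fixes Q :: "'a::real_normed_vector \<Rightarrow> real"
  assumes add: "\<And>x y. Q (x + y) = Q x + Q y" and sc: "\<And>r x. Q (r *\<^sub>R x) = r * Q x"
  shows "\<forall>a b. Q a = 1 \<longrightarrow> Q b = 1 \<longrightarrow> (\<exists>S b'. connected S \<and> a \<in> S \<and> b' \<in> S \<and> norm b' = norm b \<and> (\<forall>x\<in>S. Q x \<ge> 1))"
proof (intro allI impI)
  fix a b assume ab: "Q a = 1" "Q b = 1"
  have "\<forall>x\<in>closed_segment a b. Q x \<ge> 1"
    using ab by (auto simp: closed_segment_def add sc)
  then show "\<exists>S b'. connected S \<and> a \<in> S \<and> b' \<in> S \<and> norm b' = norm b \<and> (\<forall>x\<in>S. Q x \<ge> 1)"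
    by (intro exI[of _ "closed_segment a b"] exI[of _ b]) auto
qed

lemma link_quad:
  fixes B :: "'a::real_normed_vector \<Rightarrow> 'a \<Rightarrow> real"
  assumes addl: "\<And>x y z. B (x + y) z = B x z + B y z"
    and addr: "\<And>x y z. B z (x + y) = B z x + B z y"
    and scl: "\<And>r x y. B (r *\<^sub>R x) y = r * B x y"
    and scr: "\<And>r x y. B y (r *\<^sub>R x) = r * B y x"
    and sym: "\<And>x y. B x y = B y x"
  shows "\<forall>a b. B a a = 1 \<longrightarrow> B b b = 1 \<longrightarrow> (\<exists>S b'. connected S \<and> a \<in> S \<and> b' \<in> S \<and> norm b' = norm b \<and> (\<forall>x\<in>S. B x x \<ge> 1))"
proof (intro allI impI)
  fix a b assume ab: "B a a = 1" "B b b = 1"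
  have negl: "\<And>x y. B (-x) y = - B x y" using scl[where r="-1"] by simp
  have negr: "\<And>x y. B y (-x) = - B y x" using scr[where r="-1"] by simp
  define b' where "b' = (if B a b \<ge> 0 then b else (-1) *\<^sub>R b)"
  have b'1: "B b' b' = 1" "B a b' \<ge> 0" "norm b' = norm b"
    using ab by (auto simp: b'_def scl scr negl negr)
  define f where "f = (\<lambda>t. cos t *\<^sub>R a + sin t *\<^sub>R b')"
  define S where "S = f ` {0..pi/2}"
  have "connected S" unfolding S_def f_def
    by (intro connected_continuous_image continuous_intros) auto
  moreover have "a \<in> S" unfolding S_def f_def by (rule image_eqI[of _ _ 0]) auto
  moreover have "b' \<in> S" unfolding S_def f_def by (rule image_eqI[of _ _ "pi/2"]) auto
  moreover have "\<forall>x\<in>S. B x x \<ge> 1"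
  proof
    fix x assume "x \<in> S"
    then obtain t where t: "0 \<le> t" "t \<le> pi/2" "x = f t" unfolding S_def by auto
    have "B x x = (cos t)^2 * B a a + (sin t)^2 * B b' b' + 2 * (sin t * cos t) * B a b'"
      unfolding t f_def by (simp add: addl addr scl scr sym[of b' a] algebra_simps power2_eq_square)
    also have "\<dots> = 1 + 2 * (sin t * cos t) * B a b'"
      using ab b'1 sin_cos_squared_add[of t] by simp
    finally show "B x x \<ge> 1"
      using t b'1 sin_ge_zero[of t] cos_ge_zero[of t] by simp
  qed
  ultimately show "\<exists>S b'. connected S \<and> a \<in> S \<and> b' \<in> S \<and> norm b' = norm b \<and> (\<forall>x\<in>S. B x x \<ge> 1)"
    using b'1 by blast
qed


lemma cont_lin:
  fixes P :: "'a::real_normed_vector \<Rightarrow> 'k::real_normed_field"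
  assumes add: "\<And>x y. P (x + y) = P x + P y" and sc: "\<And>r x. P (r *\<^sub>R x) = of_real r * P x"
    and e: "e > 0" and bd: "\<And>x. norm x < e \<Longrightarrow> norm (P x) \<le> 1"
  shows "continuous_on UNIV P"
proof -
  have "bounded_linear P"
  proof (rule bounded_linear_intro[where K="2/e"])
    show "P (x + y) = P x + P y" for x y by (rule add)
    show "P (r *\<^sub>R x) = r *\<^sub>R P x" for r x by (simp add: sc scaleR_conv_of_real)
    show "norm (P x) \<le> norm x * (2/e)" for x
    proof (cases "x = 0")
      case True
      have "P 0 = 0" using sc[of 0 0] by simp
      then show ?thesis using True by simp
    next
      case False
      define c where "c = e / (2 * norm x)"
      have c: "c > 0" using e False by (simp add: c_def)
      have "norm (c *\<^sub>R x) < e" using c e False by (simp add: c_def)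
      then have "norm (P (c *\<^sub>R x)) \<le> 1" by (rule bd)
      then have "c * norm (P x) \<le> 1" using c by (simp add: sc norm_mult)
      then have "e * norm (P x) \<le> 2 * norm x" using False by (simp add: c_def field_simps)
      then show ?thesis using e by (simp add: field_simps)
    qed
  qed
  then show ?thesis by (rule linear_continuous_on)
qed

lemma cont_quad:
  fixes B :: "'a::real_normed_vector \<Rightarrow> 'a \<Rightarrow> 'k::real_normed_field"
  assumes addl: "\<And>x y z. B (x + y) z = B x z + B y z"
    and addr: "\<And>x y z. B z (x + y) = B z x + B z y"
    and scl: "\<And>r x y. B (r *\<^sub>R x) y = of_real r * B x y"
    and scr: "\<And>r x y. B y (r *\<^sub>R x) = of_real r * B y x"
    and sym: "\<And>x y. B x y = B y x"
    and e: "e > 0" and bd: "\<And>x. norm x < e \<Longrightarrow> norm (B x x) \<le> 1"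
  shows "continuous_on UNIV (\<lambda>x. B x x)"
proof -
  define M where "M = 4 / e^2"
  have M: "M > 0" using e by (simp add: M_def)
  have zl: "B 0 y = 0" for y using scl[where r=0 and x=0 and y=y] by simp
  have zr: "B y 0 = 0" for y using scr[where r=0 and x=0 and y=y] by simp
  have sq: "norm (B x x) \<le> M * (norm x)^2" for x
  proof (cases "x = 0")
    case True then show ?thesis by (simp add: zl)
  next
    case False
    define c where "c = e / (2 * norm x)"
    have c: "c > 0" using e False by (simp add: c_def)
    have "norm (c *\<^sub>R x) < e" using c e False by (simp add: c_def)
    then have "norm (B (c *\<^sub>R x) (c *\<^sub>R x)) \<le> 1" by (rule bd)
    then have "c^2 * norm (B x x) \<le> 1" using c by (simp add: scl scr norm_mult power2_eq_square)
    then have "e^2 * norm (B x x) \<le> 4 * (norm x)^2" using False by (simp add: c_def field_simps power2_eq_square)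
    then show ?thesis using e by (simp add: M_def field_simps)
  qed
  have subl: "B (x - y) z = B x z - B y z" for x y z using addl[where x="x - y" and y=y and z=z] by (simp add: eq_diff_eq)
  have subr: "B z (x - y) = B z x - B z y" for x y z using addr[where x="x - y" and y=y and z=z] by (simp add: eq_diff_eq)
  have pol: "B (u + v) (u + v) - B (u - v) (u - v) = 4 * B u v" for u v
    by (simp add: addl addr subl subr sym[of v u] algebra_simps)
  have unit: "norm (B u v) \<le> 2 * M" if "norm u = 1" "norm v = 1" for u v
  proof -
    have "4 * norm (B u v) = norm (B (u + v) (u + v) - B (u - v) (u - v))"
      by (simp add: pol norm_mult)
    also have "\<dots> \<le> norm (B (u + v) (u + v)) + norm (B (u - v) (u - v))" by (rule norm_triangle_ineq4)
    also have "\<dots> \<le> M * (norm (u+v))^2 + M * (norm (u - v))^2" using sq by (intro add_mono) auto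
    also have "\<dots> \<le> M * 2^2 + M * 2^2"
    proof -
      have "norm (u+v) \<le> 2" "norm (u-v) \<le> 2"
        using norm_triangle_ineq[of u v] norm_triangle_ineq4[of u v] that by auto
      then have "(norm (u+v))^2 \<le> 2^2" "(norm (u-v))^2 \<le> 2^2"
        by (intro power_mono; simp)+
      then show ?thesis using M by (intro add_mono mult_left_mono) auto
    qed
    finally show ?thesis by simp
  qed
  have bb: "bounded_bilinear B"
  proof
    show "B (a + a') b = B a b + B a' b" for a a' b by (rule addl)
    show "B a (b + b') = B a b + B a b'" for a b b' by (rule addr)
    show "B (r *\<^sub>R a) b = r *\<^sub>R B a b" for r a b by (simp add: scl scaleR_conv_of_real)
    show "B a (r *\<^sub>R b) = r *\<^sub>R B a b" for r a b by (simp add: scr scaleR_conv_of_real)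
    show "\<exists>K. \<forall>a b. norm (B a b) \<le> norm a * norm b * K"
    proof (intro exI allI)
      fix a b
      show "norm (B a b) \<le> norm a * norm b * (2 * M)"
      proof (cases "a = 0 \<or> b = 0")
        case True then show ?thesis by (auto simp: zl zr)
      next
        case False
        then have na: "norm a > 0" "norm b > 0" by auto
        have "B a b = of_real (norm a * norm b) * B ((1/norm a) *\<^sub>R a) ((1/norm b) *\<^sub>R b)"
          using na by (simp add: scl scr)
        then have "norm (B a b) = norm a * norm b * norm (B ((1/norm a) *\<^sub>R a) ((1/norm b) *\<^sub>R b))"
          using na by (simp add: norm_mult)
        also have "\<dots> \<le> norm a * norm b * (2 * M)"
          using na by (intro mult_left_mono unit) auto
        finally show ?thesis .
      qed
    qed
  qed
  show ?thesis
    by (rule bounded_bilinear.continuous_on[OF bb continuous_on_id continuous_on_id])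
qed


definition bil :: "((nat \<Rightarrow> 'a) \<Rightarrow> 'k) \<Rightarrow> 'a \<Rightarrow> 'a \<Rightarrow> 'k" where
  "bil L u v = L (\<lambda>i. if i = 0 then u else v)"

lemma sm_agree:
  assumes "symmetric_multilinear sc n L" "\<And>i. i < n \<Longrightarrow> v i = w i"
  shows "L v = L w"
  using assms unfolding symmetric_multilinear_def by blast

lemma hp1:
  assumes L: "symmetric_multilinear sc 1 L"
  shows "L (\<lambda>_. x + y) = L (\<lambda>_. x) + L (\<lambda>_. y)" and "L (\<lambda>_. sc c x) = c * L (\<lambda>_. x)"
proof -
  have A: "L (\<lambda>_. z) = L ((\<lambda>_. x)(0 := z))" for z by (rule sm_agree[OF L]) auto
  have "L ((\<lambda>_. x)(0 := x + y)) = L ((\<lambda>_. x)(0 := x)) + L ((\<lambda>_. x)(0 := y))"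
    using L unfolding symmetric_multilinear_def by blast
  then show "L (\<lambda>_. x + y) = L (\<lambda>_. x) + L (\<lambda>_. y)" using A by metis
  have "L ((\<lambda>_. x)(0 := sc c x)) = c * L ((\<lambda>_. x)(0 := x))"
    using L unfolding symmetric_multilinear_def by blast
  then show "L (\<lambda>_. sc c x) = c * L (\<lambda>_. x)" using A by metis
qed

lemma hp2:
  assumes L: "symmetric_multilinear sc 2 L"
  shows "bil L (x + y) z = bil L x z + bil L y z"
    and "bil L z (x + y) = bil L z x + bil L z y"
    and "bil L (sc c x) y = c * bil L x y"
    and "bil L y (sc c x) = c * bil L y x"
    and "bil L x y = bil L y x"
    and "L (\<lambda>_. x) = bil L x x"
proof -
  have lin: "L (v(i := a + b)) = L (v(i := a)) + L (v(i := b))" if "i < 2" for v i a b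
    using L that unfolding symmetric_multilinear_def by blast
  have scal: "L (v(i := sc c a)) = c * L (v(i := a))" if "i < 2" for v i a c
    using L that unfolding symmetric_multilinear_def by blast
  have perm: "L (v \<circ> p) = L v" if "p permutes {..<2}" for v p
    using L that unfolding symmetric_multilinear_def by blast
  have L0: "bil L a w = L ((\<lambda>i. if i = 0 then u else w)(0 := a))" for a u w
    unfolding bil_def by (rule sm_agree[OF L]) auto
  have L1: "bil L w a = L ((\<lambda>i. if i = 0 then w else u)(1 := a))" for a u w
    unfolding bil_def by (rule sm_agree[OF L]) auto
  show "bil L (x + y) z = bil L x z + bil L y z" unfolding L0[where u=x and w=z] by (rule lin) simp
  show "bil L z (x + y) = bil L z x + bil L z y" unfolding L1[where u=x and w=z] by (rule lin) simp
  show "bil L (sc c x) y = c * bil L x y" unfolding L0[where u=x and w=y] by (rule scal) simp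
  show "bil L y (sc c x) = c * bil L y x" unfolding L1[where u=x and w=y] by (rule scal) simp
  have "L ((\<lambda>i. if i = 0 then x else y) \<circ> Transposition.transpose 0 1) = L (\<lambda>i. if i = 0 then x else y)"
    by (rule perm) (auto intro: permutes_swap_id)
  moreover have "L ((\<lambda>i. if i = 0 then x else y) \<circ> Transposition.transpose 0 1) = bil L y x"
    unfolding bil_def by (rule sm_agree[OF L]) (auto simp: less_2_cases_iff)
  ultimately show "bil L x y = bil L y x" unfolding bil_def by simp
  show "L (\<lambda>_. x) = bil L x x" unfolding bil_def by simp
qed


lemma real_case:
  fixes P :: "'a::real_normed_vector \<Rightarrow> real"
  assumes n: "n \<in> {1, 2}" and hp: "homogeneous_polynomial scaleR n P"
    and conn: "\<forall>C. connected C \<longrightarrow> connected (P ` C)"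
  shows "continuous_on UNIV P"
proof (rule ccontr)
  assume nc: "\<not> continuous_on UNIV P"
  obtain L where L: "symmetric_multilinear scaleR n L" "\<forall>x. P x = L (\<lambda>_. x)"
    using hp unfolding homogeneous_polynomial_def by blast
  from n show False
  proof
    assume n1: "n = 1"
    have L1: "symmetric_multilinear scaleR 1 L" using L(1) n1 by simp
    have add: "P (x + y) = P x + P y" for x y using hp1(1)[OF L1] L(2) by simp
    have sc: "P (r *\<^sub>R x) = r * P x" for r x using hp1(2)[OF L1] L(2) by simp
    have unb: "\<forall>e>0. \<exists>x. norm x < e \<and> \<not> \<bar>P x\<bar> \<le> 1"
    proof (rule ccontr)
      assume "\<not> ?thesis"
      then obtain e where "e > 0" "\<forall>x. norm x < e \<longrightarrow> \<bar>P x\<bar> \<le> 1" by auto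
      then have "continuous_on UNIV P" by (intro cont_lin[of P e]) (auto simp: add sc)
      with nc show False ..
    qed
    have wit: "\<forall>e>0. \<exists>b. norm b < e \<and> P b = 1"
    proof (intro allI impI)
      fix e :: real assume "e > 0"
      then obtain x where x: "norm x < e" "\<bar>P x\<bar> > 1" using unb by fastforce
      have "norm ((1 / P x) *\<^sub>R x) = norm x / \<bar>P x\<bar>" by simp
      also have "\<dots> \<le> norm x" using x by (simp add: divide_le_eq mult_le_cancel_left1)
      finally have "norm ((1 / P x) *\<^sub>R x) < e" using x by simp
      moreover have "P ((1 / P x) *\<^sub>R x) = 1" using x by (simp add: sc)
      ultimately show "\<exists>b. norm b < e \<and> P b = 1" by blast
    qed
    obtain C where C: "connected C" "0 \<in> C" "\<exists>a\<in>C. P a \<ge> 1" "\<forall>x\<in>C. x \<noteq> 0 \<longrightarrow> P x \<ge> 1"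
      using fan[OF wit link_lin[of P, OF add sc]] by blast
    have P0: "P 0 = 0" using sc[of 0 0] by simp
    from C(3) obtain a where "a \<in> C" "P a \<ge> 1" by blast
    then have "\<not> connected (P ` C)"
      by (intro not_conn[where h="\<lambda>y. y" and Q=P and a=a]) (use C P0 in auto)
    with conn C show False by blast
  next
    assume "n \<in> {2}"
    then have L2: "symmetric_multilinear scaleR 2 L" using L(1) by simp
    note B = hp2[OF L2]
    have PB: "P x = bil L x x" for x using L(2) B(6) by simp
    have unb: "\<forall>e>0. \<exists>x. norm x < e \<and> \<not> \<bar>P x\<bar> \<le> 1"
    proof (rule ccontr)
      assume "\<not> ?thesis"
      then obtain e where "e > 0" "\<forall>x. norm x < e \<longrightarrow> \<bar>bil L x x\<bar> \<le> 1" by (auto simp: PB)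
      then have "continuous_on UNIV (\<lambda>x. bil L x x)"
        by (intro cont_quad[of "bil L" e]) (auto simp: B)
      with nc show False by (simp add: PB[abs_def])
    qed
    have wit0: "\<forall>e>0. \<exists>b. norm b < e \<and> (P b = 1 \<or> P b = -1)"
    proof (intro allI impI)
      fix e :: real assume "e > 0"
      then obtain x where x: "norm x < e" "\<bar>P x\<bar> > 1" using unb by fastforce
      define s where "s = sqrt \<bar>P x\<bar>"
      have s: "s > 1" "s^2 = \<bar>P x\<bar>" using x by (auto simp: s_def)
      have "norm ((1 / s) *\<^sub>R x) = norm x / s" using s by simp
      also have "\<dots> \<le> norm x" using s by (simp add: divide_le_eq mult_le_cancel_left1)
      finally have "norm ((1 / s) *\<^sub>R x) < e" using x by simp
      moreover have "P ((1 / s) *\<^sub>R x) = P x / s^2"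
        by (simp add: PB B power2_eq_square)
      then have "P ((1 / s) *\<^sub>R x) = 1 \<or> P ((1 / s) *\<^sub>R x) = -1"
        using s x by (auto simp: abs_if)
      ultimately show "\<exists>b. norm b < e \<and> (P b = 1 \<or> P b = -1)" by blast
    qed
    obtain t :: real where t: "t = 1 \<or> t = -1" "\<forall>e>0. \<exists>b. norm b < e \<and> P b = t"
    proof -
      have "(\<forall>e>0. \<exists>b. norm b < e \<and> P b = 1) \<or> (\<forall>e>0. \<exists>b. norm b < e \<and> P b = -1)"
      proof (rule ccontr)
        assume "\<not> ?thesis"
        then obtain e1 e2 where e: "e1 > 0" "e2 > 0" "\<forall>b. norm b < e1 \<longrightarrow> P b \<noteq> 1"
          "\<forall>b. norm b < e2 \<longrightarrow> P b \<noteq> -1" by auto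
        obtain b where "norm b < min e1 e2" "P b = 1 \<or> P b = -1" using wit0 e(1,2)
          by (metis min_less_iff_conj)
        then show False using e by auto
      qed
      then show ?thesis using that by blast
    qed
    define Q where "Q x = t * P x" for x
    define B' where "B' u v = t * bil L u v" for u v
    have QB: "Q x = B' x x" for x by (simp add: Q_def B'_def PB)
    have wit: "\<forall>e>0. \<exists>b. norm b < e \<and> B' b b = 1"
      using t by (auto simp: QB[symmetric] Q_def)
    have lk: "\<forall>a b. B' a a = 1 \<longrightarrow> B' b b = 1 \<longrightarrow> (\<exists>S b'. connected S \<and> a \<in> S \<and> b' \<in> S \<and> norm b' = norm b \<and> (\<forall>x\<in>S. B' x x \<ge> 1))"
      by (rule link_quad) (auto simp: B'_def B algebra_simps)
    obtain C where C: "connected C" "0 \<in> C" "\<exists>a\<in>C. B' a a \<ge> 1" "\<forall>x\<in>C. x \<noteq> 0 \<longrightarrow> B' x x \<ge> 1"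
      using fan[of "\<lambda>x. B' x x", OF wit lk] by blast
    have P0: "P 0 = 0" using PB[of 0] B(3)[of 0 0 0] by simp
    from C(3) obtain a where "a \<in> C" "Q a \<ge> 1" by (auto simp: QB)
    then have "\<not> connected (P ` C)"
      by (intro not_conn[where h="\<lambda>y. t * y" and Q=Q and a=a])
        (use C P0 in \<open>auto simp: QB[symmetric] Q_def intro: continuous_intros\<close>)
    with conn C show False by blast
  qed
qed


lemma complex_case:
  fixes P :: "'b::real_normed_vector \<Rightarrow> complex" and sc :: "complex \<Rightarrow> 'b \<Rightarrow> 'b"
  assumes n: "n \<in> {1, 2}" and cs: "complex_normed_scaling sc" and hp: "homogeneous_polynomial sc n P"
    and conn: "\<forall>C. connected C \<longrightarrow> connected (P ` C)"
  shows "continuous_on UNIV P"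
proof (rule ccontr)
  assume nc: "\<not> continuous_on UNIV P"
  have scR: "r *\<^sub>R x = sc (complex_of_real r) x" for r x using cs unfolding complex_normed_scaling_def by simp
  have scN: "norm (sc c x) = cmod c * norm x" for c x using cs unfolding complex_normed_scaling_def by simp
  obtain L where L: "symmetric_multilinear sc n L" "\<forall>x. P x = L (\<lambda>_. x)"
    using hp unfolding homogeneous_polynomial_def by blast
  from n show False
  proof
    assume n1: "n = 1"
    have L1: "symmetric_multilinear sc 1 L" using L(1) n1 by simp
    have add: "P (x + y) = P x + P y" for x y using hp1(1)[OF L1] L(2) by simp
    have scc: "P (sc c x) = c * P x" for c x using hp1(2)[OF L1] L(2) by simp
    have sc: "P (r *\<^sub>R x) = of_real r * P x" for r x by (simp add: scR scc)
    have unb: "\<forall>e>0. \<exists>x. norm x < e \<and> \<not> norm (P x) \<le> 1"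
    proof (rule ccontr)
      assume "\<not> ?thesis"
      then obtain e where "e > 0" "\<forall>x. norm x < e \<longrightarrow> norm (P x) \<le> 1" by auto
      then have "continuous_on UNIV P" by (intro cont_lin[of P e]) (auto simp: add sc)
      with nc show False ..
    qed
    have wit: "\<forall>e>0. \<exists>b. norm b < e \<and> Re (P b) = 1"
    proof (intro allI impI)
      fix e :: real assume "e > 0"
      then obtain x where x: "norm x < e" "cmod (P x) > 1" using unb by fastforce
      have "norm (sc (1 / P x) x) = norm x / cmod (P x)" by (simp add: scN norm_divide)
      also have "\<dots> \<le> norm x" using x by (simp add: divide_le_eq mult_le_cancel_left1)
      finally have "norm (sc (1 / P x) x) < e" using x by simp
      moreover have "P (sc (1 / P x) x) = 1" using x by (auto simp: scc)
      ultimately show "\<exists>b. norm b < e \<and> Re (P b) = 1" by force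
    qed
    have addR: "Re (P (x + y)) = Re (P x) + Re (P y)" for x y by (simp add: add)
    have scRe: "Re (P (r *\<^sub>R x)) = r * Re (P x)" for r x by (simp add: sc)
    obtain C where C: "connected C" "0 \<in> C" "\<exists>a\<in>C. Re (P a) \<ge> 1" "\<forall>x\<in>C. x \<noteq> 0 \<longrightarrow> Re (P x) \<ge> 1"
      using fan[OF wit link_lin[of "\<lambda>x. Re (P x)", OF addR scRe]] by blast
    have P0: "P 0 = 0" using sc[of 0 0] by simp
    from C(3) obtain a where "a \<in> C" "Re (P a) \<ge> 1" by blast
    then have "\<not> connected (P ` C)"
      by (intro not_conn[where h=Re and Q="\<lambda>x. Re (P x)" and a=a]) (use C P0 in \<open>auto intro: continuous_intros\<close>)
    with conn C show False by blast
  next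
    assume "n \<in> {2}"
    then have L2: "symmetric_multilinear sc 2 L" using L(1) by simp
    note B = hp2[OF L2]
    have PB: "P x = bil L x x" for x using L(2) B(6) by simp
    have unb: "\<forall>e>0. \<exists>x. norm x < e \<and> \<not> cmod (P x) \<le> 1"
    proof (rule ccontr)
      assume "\<not> ?thesis"
      then obtain e where "e > 0" "\<forall>x. norm x < e \<longrightarrow> cmod (bil L x x) \<le> 1" by (auto simp: PB)
      then have "continuous_on UNIV (\<lambda>x. bil L x x)"
        by (intro cont_quad[of "bil L" e]) (auto simp: B scR)
      with nc show False by (simp add: PB[abs_def])
    qed
    have wit: "\<forall>e>0. \<exists>b. norm b < e \<and> Re (bil L b b) = 1"
    proof (intro allI impI)
      fix e :: real assume "e > 0"
      then obtain x where x: "norm x < e" "cmod (P x) > 1" using unb by fastforce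
      define c where "c = csqrt (1 / P x)"
      have c2: "c * c = 1 / P x" unfolding c_def by (metis power2_csqrt power2_eq_square)
      have "(cmod c)^2 = cmod (1 / P x)" by (metis c2 norm_mult power2_eq_square)
      also have "\<dots> < 1" using x by (simp add: norm_divide divide_less_eq)
      finally have "cmod c < 1" by (simp add: power_less_one_iff abs_less_iff power2_less_eq_zero_iff)
      then have "norm (sc c x) \<le> norm x" by (simp add: scN mult_left_le_one_le)
      then have "norm (sc c x) < e" using x by simp
      moreover have "bil L (sc c x) (sc c x) = (c * c) * P x"
        by (simp add: B PB)
      then have "bil L (sc c x) (sc c x) = 1"
        using x c2 by (auto simp: field_simps)
      ultimately show "\<exists>b. norm b < e \<and> Re (bil L b b) = 1" by force
    qed
    define B' where "B' u v = Re (bil L u v)" for u v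
    have lk: "\<forall>a b. B' a a = 1 \<longrightarrow> B' b b = 1 \<longrightarrow> (\<exists>S b'. connected S \<and> a \<in> S \<and> b' \<in> S \<and> norm b' = norm b \<and> (\<forall>x\<in>S. B' x x \<ge> 1))"
      by (rule link_quad) (auto simp: B'_def B scR)
    obtain C where C: "connected C" "0 \<in> C" "\<exists>a\<in>C. B' a a \<ge> 1" "\<forall>x\<in>C. x \<noteq> 0 \<longrightarrow> B' x x \<ge> 1"
      using fan[of "\<lambda>x. B' x x", OF wit[folded B'_def] lk] by blast
    have "sc 0 0 = 0" using scN[of 0 0] by simp
    then have P0: "P 0 = 0" using PB[of 0] B(3)[of 0 0 0] by simp
    from C(3) obtain a where "a \<in> C" "B' a a \<ge> 1" by auto
    then have "\<not> connected (P ` C)"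
      by (intro not_conn[where h=Re and Q="\<lambda>x. B' x x" and a=a])
        (use C P0 in \<open>auto simp: B'_def PB intro: continuous_intros\<close>)
    with conn C show False by blast
  qed
qed

theorem proposition2p2:
  fixes n :: nat
  assumes "n \<in> {1, 2}"
  shows "(\<forall>P :: 'a::real_normed_vector \<Rightarrow> real.
            homogeneous_polynomial scaleR n P \<longrightarrow>
              (continuous_on UNIV P \<longleftrightarrow> (\<forall>C. connected C \<longrightarrow> connected (P ` C))))
       \<and> (\<forall>(sc :: complex \<Rightarrow> 'b::real_normed_vector \<Rightarrow> 'b) (P :: 'b \<Rightarrow> complex).
            complex_normed_scaling sc \<longrightarrow> homogeneous_polynomial sc n P \<longrightarrow>
              (continuous_on UNIV P \<longleftrightarrow> (\<forall>C. connected C \<longrightarrow> connected (P ` C))))"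
proof -
  have fwd: "connected (P ` C)" if "continuous_on UNIV P" "connected C" for P :: "'c::topological_space \<Rightarrow> 'd::topological_space" and C
    using connected_continuous_image[OF continuous_on_subset[OF that(1) subset_UNIV] that(2)] .
  show ?thesis
  proof (intro conjI allI impI iffI)
    fix P :: "'a \<Rightarrow> real" and C :: "'a set"
    assume "continuous_on UNIV P" "connected C"
    then show "connected (P ` C)" by (rule fwd)
  next
    fix P :: "'a \<Rightarrow> real"
    assume "homogeneous_polynomial scaleR n P" "\<forall>C. connected C \<longrightarrow> connected (P ` C)"
    then show "continuous_on UNIV P" by (rule real_case[OF assms])
  next
    fix P :: "'b \<Rightarrow> complex" and C :: "'b set"
    assume "continuous_on UNIV P" "connected C"
    then show "connected (P ` C)" by (rule fwd)
  next
    fix sc :: "complex \<Rightarrow> 'b \<Rightarrow> 'b" and P :: "'b \<Rightarrow> complex"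
    assume "complex_normed_scaling sc" "homogeneous_polynomial sc n P" "\<forall>C. connected C \<longrightarrow> connected (P ` C)"
    then show "continuous_on UNIV P" by (rule complex_case[OF assms])
  qed
qed

end
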